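(* Let $q$ be a prime power and $k\ge3$, $u\ge2$, $h\ge1$ integers. Let $U_1,\dots,U_h$ be $u$-dimensional subspaces of $\mathbf F_q^k$ with $U_i\cap U_j=\{0\}$ for $i\ne j$, and assume $q^k-q^{k-1}>h(q^u-1)$. Let $U$ be the set of nonzero vectors of $\mathbf F_q^k$ not in $U_1\cup\dots\cup U_h$, let $\widetilde G$ be a matrix whose columns consist of exactly one representative of each class $\{\lambda\mathbf v:\lambda\in\mathbf F_q^*\}$, $\mathbf v\in U$, and let $\mathbf C$ be the linear code with generator matrix $\widetilde G$. If $h\le q^u$, then $\mathbf C$ is a linear $\big[\frac{(q^k-1)-h(q^u-1)}{q-1},\,k,\,q^{k-1}-hq^{u-1}\big]_q$ code (i.e., its minimum distance equals $q^{k-1}-hq^{u-1}$). *)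

theory Defs
  imports "HOL-Analysis.Analysis"
begin

definition hamming_wt :: "'a::zero ^ 'm::finite \<Rightarrow> nat" where
  "hamming_wt c = card {j. c $ j \<noteq> 0}"

text \<open>Minimum distance of a linear code = minimum weight of a nonzero codeword.\<close>
definition min_dist :: "('a::zero ^ 'm::finite) set \<Rightarrow> nat" where
  "min_dist C = Min {hamming_wt c | c. c \<in> C \<and> c \<noteq> 0}"

text \<open>Linear code generated by the k x N generator matrix G (rows indexed by 'n):
  all combinations x G of its rows.\<close>
definition gen_code :: "'a::field ^ 'm::finite ^ 'n::finite \<Rightarrow> ('a ^ 'm) set" where
  "gen_code G = range (\<lambda>x. x v* G)"

end

theory Submission
  imports Defs
begin

definition dp :: "'a::field^'n::finite \<Rightarrow> 'a^'n \<Rightarrow> 'a" where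
  "dp x v = (\<Sum>i\<in>UNIV. v$i * x$i)"

lemma dp_add: "dp x (v + w) = dp x v + dp x w"
  by (simp add: dp_def sum.distrib algebra_simps)
lemma dp_scale: "dp x (c *s v) = c * dp x v"
  by (simp add: dp_def sum_distrib_left algebra_simps)
lemma dp_diff: "dp x (v - w) = dp x v - dp x w"
  by (simp add: dp_def sum_subtractf algebra_simps)
lemma dp_comm: "dp x v = dp v x"
  by (simp add: dp_def mult.commute)
lemma dp_zero[simp]: "dp x 0 = 0"
  by (simp add: dp_def)
lemma dp_zero_left[simp]: "dp 0 v = 0"
  by (simp add: dp_def)
lemma vmult_dp: "(x v* G) $ j = dp x (column j G)"
  by (simp add: dp_def vector_matrix_mult_def column_def mult.commute)

lemma lin_vm: "Vector_Spaces.linear (*s) (*s) (\<lambda>x::'a::field^'n::finite. x v* (G::'a^'m::finite^'n))"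
  unfolding Vector_Spaces.linear_iff
  by (auto simp: vector_matrix_left_distrib vec.vector_space_axioms vec_eq_iff vector_matrix_mult_def sum_distrib_left sum.distrib algebra_simps)

lemma q2: "CARD('a::{field,finite}) \<ge> 2"
proof -
  have "card {0::'a, 1} \<le> CARD('a)" by (rule card_mono) auto
  then show ?thesis by simp
qed

lemma card_nz: "card {t::'a::{field,finite}. t \<noteq> 0} = CARD('a) - 1"
proof -
  have "{t::'a. t \<noteq> 0} = UNIV - {0}" by auto
  then show ?thesis by (simp add: card_Diff_subset)
qed

lemma card_filter_sum: "finite A \<Longrightarrow> card {v\<in>A. P v} = (\<Sum>v\<in>A. if P v then 1 else 0)"
  by (simp add: sum.inter_filter[symmetric])

lemma fiber:
  fixes W :: "('a::{field,finite}^'n::finite) set"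
  assumes W: "vec.subspace W" and w0: "w0 \<in> W" "dp x w0 \<noteq> 0"
  shows "card {v\<in>W. dp x v \<noteq> 0} = (CARD('a) - 1) * card {v\<in>W. dp x v = 0}"
proof -
  define w1 where "w1 = (1 / dp x w0) *s w0"
  have w1W: "w1 \<in> W" unfolding w1_def using W w0 vec.subspace_scale by blast
  have dw1: "dp x w1 = 1" unfolding w1_def using w0 by (simp add: dp_scale)
  define f where "f = (\<lambda>(t::'a, v). v + t *s w1)"
  define g where "g = (\<lambda>y. (dp x y, y - dp x y *s w1))"
  have "bij_betw f ({t. t \<noteq> 0} \<times> {v\<in>W. dp x v = 0}) {v\<in>W. dp x v \<noteq> 0}"
  proof (rule bij_betw_byWitness[where f'=g])
    show "\<forall>a\<in>{t. t \<noteq> 0} \<times> {v \<in> W. dp x v = 0}. g (f a) = a"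
      by (auto simp: f_def g_def dp_add dp_scale dw1)
    show "\<forall>a'\<in>{v \<in> W. dp x v \<noteq> 0}. f (g a') = a'"
      by (auto simp: f_def g_def)
    show "f ` ({t. t \<noteq> 0} \<times> {v \<in> W. dp x v = 0}) \<subseteq> {v \<in> W. dp x v \<noteq> 0}"
      using W w1W by (auto simp: f_def dp_add dp_scale dw1 intro!: vec.subspace_add vec.subspace_scale)
    show "g ` {v \<in> W. dp x v \<noteq> 0} \<subseteq> {t. t \<noteq> 0} \<times> {v \<in> W. dp x v = 0}"
      using W w1W by (auto simp: g_def dp_diff dp_scale dw1 intro!: vec.subspace_diff vec.subspace_scale)
  qed
  then have "card {v\<in>W. dp x v \<noteq> 0} = card ({t::'a. t \<noteq> 0} \<times> {v\<in>W. dp x v = 0})"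
    by (simp add: bij_betw_same_card)
  then show ?thesis by (simp add: card_cartesian_product card_nz)
qed


lemma card_subspace:
  fixes W :: "('a::{field,finite}^'n::finite) set"
  assumes "vec.subspace W"
  shows "card W = CARD('a) ^ vec.dim W"
proof -
  obtain B where B: "B \<subseteq> W" "vec.independent B" "W \<subseteq> vec.span B" "card B = vec.dim W"
    using vec.basis_exists[of W] by blast
  have fB: "finite B" by simp
  have WB: "W = vec.span B"
    using B assms vec.span_minimal by blast
  define \<phi> where "\<phi> = (\<lambda>c. \<Sum>v\<in>B. c v *s v)"
  have im: "\<phi> ` (PiE B (\<lambda>_. UNIV)) = W"
  proof -
    have "vec.span B = range \<phi>" unfolding \<phi>_def by (rule vec.span_finite[OF fB])
    moreover have "range \<phi> = \<phi> ` (PiE B (\<lambda>_. UNIV))"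
    proof
      show "range \<phi> \<subseteq> \<phi> ` (PiE B (\<lambda>_. UNIV))"
      proof
        fix y assume "y \<in> range \<phi>"
        then obtain u where y: "y = \<phi> u" by auto
        have "\<phi> (restrict u B) = \<phi> u" unfolding \<phi>_def by (rule sum.cong) auto
        moreover have "restrict u B \<in> PiE B (\<lambda>_. UNIV)" by auto
        ultimately show "y \<in> \<phi> ` (PiE B (\<lambda>_. UNIV))" using y by (metis image_eqI)
      qed
    qed auto
    ultimately show ?thesis using WB by simp
  qed
  have inj: "inj_on \<phi> (PiE B (\<lambda>_. UNIV))"
  proof (rule inj_onI)
    fix c1 c2 assume c1: "c1 \<in> PiE B (\<lambda>_. UNIV)" and c2: "c2 \<in> PiE B (\<lambda>_. UNIV)" and e: "\<phi> c1 = \<phi> c2"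
    have "(\<Sum>v\<in>B. (c1 v - c2 v) *s v) = 0"
      using e unfolding \<phi>_def by (simp add: vec.scale_left_diff_distrib sum_subtractf)
    then have "\<forall>v\<in>B. c1 v - c2 v = 0"
      using vec.independent_explicit_finite_subsets[THEN iffD1, OF B(2), rule_format, of B "\<lambda>v. c1 v - c2 v"] fB by blast
    then show "c1 = c2" using c1 c2 by (auto simp: PiE_def extensional_def fun_eq_iff)
  qed
  have "card W = card (PiE B (\<lambda>_. (UNIV::'a set)))"
    using card_image[OF inj] im by simp
  also have "\<dots> = CARD('a) ^ card B" by (simp add: card_PiE)
  finally show ?thesis using B(4) by simp
qed

lemma fiber2:
  fixes W :: "('a::{field,finite}^'n::finite) set"
  assumes W: "vec.subspace W" and w0: "w0 \<in> W" "dp x w0 \<noteq> 0"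
  shows "card {v\<in>W. dp x v \<noteq> 0} = (CARD('a) - 1) * CARD('a) ^ (vec.dim W - 1)"
proof -
  let ?q = "CARD('a)" and ?d = "vec.dim W"
  have q: "?q \<ge> 2" by (rule q2)
  have split: "W = {v\<in>W. dp x v \<noteq> 0} \<union> {v\<in>W. dp x v = 0}" by auto
  have "card W = card {v\<in>W. dp x v \<noteq> 0} + card {v\<in>W. dp x v = 0}"
    by (subst split, rule card_Un_disjoint) auto
  also have "\<dots> = ?q * card {v\<in>W. dp x v = 0}"
    using fiber[OF W w0] q by (simp add: algebra_simps)
  finally have e: "?q ^ ?d = ?q * card {v\<in>W. dp x v = 0}" using card_subspace[OF W] by simp
  have "?d \<noteq> 0"
  proof
    assume d0: "?d = 0"
    have "1 = ?q * card {v\<in>W. dp x v = 0}" using e unfolding d0 power_0 .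
    then show False using q by (metis dvd_triv_left nat_dvd_1_iff_1 numeral_le_one_iff semiring_norm(69))
  qed
  then have "?q ^ ?d = ?q * ?q ^ (?d - 1)" by (metis power_eq_if)
  with e q have "card {v\<in>W. dp x v = 0} = ?q ^ (?d - 1)" by simp
  then show ?thesis using fiber[OF W w0] by simp
qed

lemma hyper:
  fixes x :: "'a::{field,finite}^'n::finite"
  assumes "x \<noteq> 0"
  shows "card {v. dp x v \<noteq> 0} = (CARD('a) - 1) * CARD('a) ^ (CARD('n) - 1)"
proof -
  obtain i where i: "x $ i \<noteq> 0" using assms by (auto simp: vec_eq_iff)
  have "dp x (axis i 1) = x $ i" proof -
    have "dp x (axis i 1) = (\<Sum>j\<in>UNIV. if j = i then x $ j else 0)"
      unfolding dp_def by (rule sum.cong) (auto simp: axis_def)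
    then show ?thesis by simp
  qed
  then have "card {v\<in>UNIV. dp x v \<noteq> 0} = (CARD('a) - 1) * CARD('a) ^ (vec.dim (UNIV::('a^'n) set) - 1)"
    using fiber2[OF vec.subspace_UNIV, of "axis i 1" x] i by simp
  then show ?thesis unfolding vec_dim_card by simp
qed


lemma sum_if_const: "finite A \<Longrightarrow> (\<Sum>x\<in>A. if P x then (c::nat) else 0) = card {x\<in>A. P x} * c"
  by (simp add: sum.inter_filter[symmetric])

lemma Zcard:
  fixes W :: "('a::{field,finite}^'n::finite) set"
  assumes W: "vec.subspace W" and d: "vec.dim W \<ge> 1"
  shows "card {x. \<forall>w\<in>W. dp x w = 0} * CARD('a) ^ (vec.dim W - 1) = CARD('a) ^ (CARD('n) - 1)"
proof -
  define q where "q = CARD('a)"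
  define P where "P = q ^ (vec.dim W - 1)"
  define A where "A = q ^ (CARD('n) - 1)"
  define Bad where "Bad = {x::'a^'n. \<exists>w\<in>W. dp x w \<noteq> 0}"
  define Z where "Z = {x::'a^'n. \<forall>w\<in>W. dp x w = 0}"
  have q: "q \<ge> 2" unfolding q_def by (rule q2)
  have S1: "(\<Sum>x\<in>UNIV. card {v\<in>W. dp x v \<noteq> 0}) = card Bad * ((q - 1) * P)"
  proof -
    have "(\<Sum>x\<in>UNIV. card {v\<in>W. dp x v \<noteq> 0}) = (\<Sum>x\<in>UNIV. if x \<in> Bad then (q - 1) * P else 0)"
    proof (rule sum.cong)
      fix x :: "'a^'n"
      show "card {v\<in>W. dp x v \<noteq> 0} = (if x \<in> Bad then (q - 1) * P else 0)"
      proof (cases "x \<in> Bad")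
        case True
        then obtain w where "w \<in> W" "dp x w \<noteq> 0" unfolding Bad_def by auto
        then show ?thesis using fiber2[OF W, of w x] True unfolding q_def P_def by simp
      next
        case False
        then have "{v\<in>W. dp x v \<noteq> 0} = {}" unfolding Bad_def by auto
        then show ?thesis using False by simp
      qed
    qed simp
    also have "\<dots> = card Bad * ((q - 1) * P)" by (simp add: sum_if_const)
    finally show ?thesis .
  qed
  have S2: "(\<Sum>x\<in>UNIV. card {v\<in>W. dp x v \<noteq> 0}) = (\<Sum>v\<in>W. card {x. dp x v \<noteq> 0})"
  proof -
    have "(\<Sum>x\<in>UNIV. card {v\<in>W. dp x v \<noteq> 0}) = (\<Sum>x\<in>UNIV. \<Sum>v\<in>W. if dp x v \<noteq> 0 then 1 else 0)"
      by (simp add: card_filter_sum)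
    also have "\<dots> = (\<Sum>v\<in>W. \<Sum>x\<in>UNIV. if dp x v \<noteq> 0 then 1 else 0)" by (rule sum.swap)
    also have "\<dots> = (\<Sum>v\<in>W. card {x. dp x v \<noteq> 0})"
      by (rule sum.cong) (simp_all add: card_filter_sum[of UNIV, simplified])
    finally show ?thesis .
  qed
  have S3: "(\<Sum>v\<in>W. card {x. dp x v \<noteq> 0}) = (card W - 1) * ((q - 1) * A)"
  proof -
    have "(\<Sum>v\<in>W. card {x. dp x v \<noteq> 0}) = (\<Sum>v\<in>W. if v \<noteq> 0 then (q - 1) * A else 0)"
    proof (rule sum.cong)
      fix v :: "'a^'n"
      show "card {x. dp x v \<noteq> 0} = (if v \<noteq> 0 then (q - 1) * A else 0)"
      proof (cases "v = 0")
        case True then show ?thesis by simp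
      next
        case False
        have "{x. dp x v \<noteq> 0} = {x. dp v x \<noteq> 0}" by (simp add: dp_comm)
        then show ?thesis using hyper[OF False] False unfolding q_def A_def by simp
      qed
    qed simp
    also have "\<dots> = card {v\<in>W. v \<noteq> 0} * ((q - 1) * A)" by (simp add: sum_if_const)
    also have "card {v\<in>W. v \<noteq> 0} = card W - 1"
    proof -
      have "{v\<in>W. v \<noteq> 0} = W - {0}" by auto
      then show ?thesis using vec.subspace_0[OF W] by (simp add: card_Diff_subset)
    qed
    finally show ?thesis .
  qed
  have cW: "card W = q * P"
    using card_subspace[OF W] d unfolding q_def P_def by (metis Suc_diff_le diff_Suc_1 power_Suc)
  have e1: "card Bad * ((q - 1) * P) = (q * P - 1) * ((q - 1) * A)"
    using S1 S2 S3 cW by metis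
  have q1: "q - 1 > 0" using q by simp
  have e2: "card Bad * P = (q * P - 1) * A"
    using e1 q1 by (metis (no_types, lifting) mult.left_commute mult_cancel_left not_gr0)
  have kpos: "CARD('n) \<ge> 1" by (simp add: Suc_leI)
  have cU: "card Z + card Bad = q * A"
  proof -
    have "UNIV = Z \<union> Bad" "Z \<inter> Bad = {}" unfolding Z_def Bad_def by auto
    then have "card (UNIV :: ('a^'n) set) = card Z + card Bad" by (metis card_Un_disjoint finite)
    moreover have "card (UNIV :: ('a^'n) set) = q * A"
      unfolding q_def A_def CARD_vec using kpos by (metis Suc_diff_le diff_Suc_1 power_Suc)
    ultimately show ?thesis by simp
  qed
  have PA: "P \<ge> 1" unfolding P_def using q by simp
  have h1: "card Z * P + card Bad * P = q * P * A" using cU by (metis add_mult_distrib mult.commute mult.assoc)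
  have h2: "card Bad * P = q * P * A - A" using e2 by (simp add: diff_mult_distrib)
  have h3: "A \<le> q * P * A" using q PA by simp
  have "card Z * P = A" using h1 h2 h3 by linarith
  then show ?thesis unfolding Z_def P_def A_def q_def .
qed

lemma arith1: fixes q A P h :: int assumes "q*A - A > h*(q*P - 1)" "P \<ge> 1" "q \<ge> 2" "h \<ge> 0" shows "h*P < A"
proof (rule ccontr)
  assume "\<not> h*P < A"
  then have "A \<le> h*P" by simp
  then have "(q - 1) * A \<le> (q - 1) * (h * P)" using assms by (intro mult_left_mono) auto
  moreover have "h * P \<ge> h" using assms by (simp add: mult_le_cancel_left1)
  ultimately show False using assms(1) by (simp add: algebra_simps)
qed
lemma arith2: fixes q A P h Z :: int assumes "Z*P = A" "h \<le> q*P" "P\<ge>1" "q\<ge>2" "Z \<ge> 1" "h \<ge> 0"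
  shows "h*(Z-1) < q*A - 1"
proof -
  have "(Z-1)*P \<ge> 0" using assms by simp
  then have "h*((Z-1)*P) \<le> q*P*((Z-1)*P)" using assms by (intro mult_right_mono) auto
  then have "h*(Z-1)*P \<le> q*P*((Z-1)*P)" by (simp add: mult.assoc)
  also have "\<dots> = q*P*A - q*P*P" using assms(1) by (simp add: algebra_simps)
  also have "\<dots> < q*P*A - P"
  proof -
    have a: "P \<le> P*P" using assms(3) by (simp add: mult_le_cancel_left1)
    have "q*P \<le> q*(P*P)" using a assms(4) by (intro mult_left_mono) auto
    moreover have "2*P \<le> q*P" using assms by (intro mult_right_mono) auto
    moreover have "q*P*P = q*(P*P)" by (simp add: mult.assoc)
    ultimately show ?thesis using assms(3) by linarith
  qed
  also have "\<dots> = (q*A - 1)*P" by (simp add: algebra_simps)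
  finally show ?thesis by (rule mult_right_less_imp_less) (use assms(3) in simp)
qed

theorem theorem2p2:
  fixes Us :: "nat \<Rightarrow> ('a::{field,finite} ^ 'n::finite) set"
    and G :: "'a ^ 'm::finite ^ 'n"
    and q k u h :: nat
  assumes q_def: "q = CARD('a)"
    and k_def: "k = CARD('n)"
    and k3: "k \<ge> 3" and u2: "u \<ge> 2" and h1: "h \<ge> 1"
    and sub: "\<And>i. i \<in> {1..h} \<Longrightarrow> vec.subspace (Us i)"
    and dimU: "\<And>i. i \<in> {1..h} \<Longrightarrow> vec.dim (Us i) = u"
    and disj: "\<And>i j. i \<in> {1..h} \<Longrightarrow> j \<in> {1..h} \<Longrightarrow> i \<noteq> j \<Longrightarrow> Us i \<inter> Us j = {0}"
    and cond: "int q ^ k - int q ^ (k - 1) > int h * (int q ^ u - 1)"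
    and U_def: "U = {v :: 'a ^ 'n. v \<noteq> 0 \<and> v \<notin> (\<Union>i\<in>{1..h}. Us i)}"
    and cols_in: "\<And>j. column j G \<in> U"
    and cols_rep: "\<And>v. v \<in> U \<Longrightarrow> \<exists>!j. \<exists>c. c \<noteq> 0 \<and> column j G = c *s v"
    and hq: "h \<le> q ^ u"
  shows "real CARD('m) = (real (q ^ k - 1) - real h * real (q ^ u - 1)) / real (q - 1)
         \<and> vec.dim (gen_code G) = k
         \<and> int (min_dist (gen_code G)) = int q ^ (k - 1) - int h * int q ^ (u - 1)"
proof -
  have q2': "q \<ge> 2" unfolding q_def by (rule q2)
  define A where "A = q ^ (k - 1)"
  define P where "P = q ^ (u - 1)"
  have qA: "q ^ k = q * A" unfolding A_def using k3 by (metis Suc_diff_le diff_Suc_1 le_trans one_le_numeral power_Suc)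
  have qP: "q ^ u = q * P" unfolding P_def using u2 by (metis Suc_diff_le diff_Suc_1 le_trans one_le_numeral power_Suc)
  have P1: "P \<ge> 1" unfolding P_def using q2' by simp
  have Uclosed: "c *s v \<in> U" if "v \<in> U" "c \<noteq> 0" for v c
  proof -
    have "c *s v \<noteq> 0" using that U_def by auto
    moreover have "c *s v \<notin> Us i" if i: "i \<in> {1..h}" for i
    proof
      assume "c *s v \<in> Us i"
      then have "(1 / c) *s (c *s v) \<in> Us i" using sub[OF i] vec.subspace_scale by blast
      then have "v \<in> Us i" using \<open>c \<noteq> 0\<close> by simp
      then show False using \<open>v \<in> U\<close> i U_def by auto
    qed
    ultimately show ?thesis unfolding U_def by auto
  qed
  have col_ne0: "column j G \<noteq> 0" for j using cols_in[of j] U_def by auto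
  have col_inj: "j1 = j2" if "column j1 G = c *s column j2 G" "c \<noteq> 0" for j1 j2 c
  proof -
    have "\<exists>!j. \<exists>c. c \<noteq> 0 \<and> column j G = c *s column j2 G" by (rule cols_rep[OF cols_in])
    moreover have "\<exists>c. c \<noteq> 0 \<and> column j2 G = c *s column j2 G" by (rule exI[of _ 1]) simp
    moreover have "\<exists>c. c \<noteq> 0 \<and> column j1 G = c *s column j2 G" using that by blast
    ultimately show ?thesis by blast
  qed
  have count: "card {v\<in>U. Pr v} = (q - 1) * card {j. Pr (column j G)}"
    if inv: "\<And>v c. c \<noteq> 0 \<Longrightarrow> Pr (c *s v) = Pr v" for Pr
  proof -
    define f where "f = (\<lambda>(c::'a, j). c *s column j G)"
    have "bij_betw f ({c. c \<noteq> 0} \<times> {j. Pr (column j G)}) {v\<in>U. Pr v}"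
      unfolding bij_betw_def
    proof
      show "inj_on f ({c. c \<noteq> 0} \<times> {j. Pr (column j G)})"
      proof (rule inj_onI, clarsimp simp: f_def)
        fix c1 j1 c2 j2
        assume c1: "c1 \<noteq> 0" and c2: "c2 \<noteq> 0" and e: "c1 *s column j1 G = c2 *s column j2 G"
        have "column j1 G = (1 / c1) *s (c1 *s column j1 G)" using c1 by simp
        also have "\<dots> = (c2 / c1) *s column j2 G" using e by simp
        finally have "j1 = j2" using col_inj[of j1 "c2/c1" j2] c1 c2 by simp
        then show "c1 = c2 \<and> j1 = j2" using e col_ne0 by simp
      qed
      show "f ` ({c. c \<noteq> 0} \<times> {j. Pr (column j G)}) = {v\<in>U. Pr v}"
      proof
        show "f ` ({c. c \<noteq> 0} \<times> {j. Pr (column j G)}) \<subseteq> {v\<in>U. Pr v}"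
          using Uclosed cols_in inv by (auto simp: f_def)
        show "{v\<in>U. Pr v} \<subseteq> f ` ({c. c \<noteq> 0} \<times> {j. Pr (column j G)})"
        proof
          fix v assume v: "v \<in> {v\<in>U. Pr v}"
          then obtain j c where jc: "c \<noteq> 0" "column j G = c *s v" using cols_rep by blast
          then have "v = f (1 / c, j)" by (simp add: f_def)
          moreover have "Pr (column j G)" using jc v inv by simp
          ultimately show "v \<in> f ` ({c. c \<noteq> 0} \<times> {j. Pr (column j G)})" using jc by auto
        qed
      qed
    qed
    then have "card {v\<in>U. Pr v} = card ({c::'a. c \<noteq> 0} \<times> {j. Pr (column j G)})"
      by (simp add: bij_betw_same_card)
    then show ?thesis by (simp add: card_cartesian_product card_nz q_def)
  qed
  have sets: "card {v\<in>U. Pr v} = card {v. Pr v} - (\<Sum>i\<in>{1..h}. card {v\<in>Us i. Pr v})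
      \<and> (\<Sum>i\<in>{1..h}. card {v\<in>Us i. Pr v}) \<le> card {v. Pr v}"
    if np: "\<not> Pr 0" for Pr
  proof -
    have e: "{v\<in>U. Pr v} = {v. Pr v} - (\<Union>i\<in>{1..h}. {v\<in>Us i. Pr v})"
      unfolding U_def using np by auto
    have cu: "card (\<Union>i\<in>{1..h}. {v\<in>Us i. Pr v}) = (\<Sum>i\<in>{1..h}. card {v\<in>Us i. Pr v})"
    proof (rule card_UN_disjoint)
      show "\<forall>i\<in>{1..h}. \<forall>j\<in>{1..h}. i \<noteq> j \<longrightarrow> {v\<in>Us i. Pr v} \<inter> {v\<in>Us j. Pr v} = {}"
      proof (intro ballI impI)
        fix i j assume "i \<in> {1..h}" "j \<in> {1..h}" "i \<noteq> j"
        then have ij: "Us i \<inter> Us j = {0}" by (rule disj)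
        have z: "y = 0" if "y \<in> Us i" "y \<in> Us j" for y using ij that by blast
        show "{v\<in>Us i. Pr v} \<inter> {v\<in>Us j. Pr v} = {}" using np z by auto
      qed
    qed simp_all
    have sub': "(\<Union>i\<in>{1..h}. {v\<in>Us i. Pr v}) \<subseteq> {v. Pr v}" by auto
    have "card {v\<in>U. Pr v} = card {v. Pr v} - card (\<Union>i\<in>{1..h}. {v\<in>Us i. Pr v})"
      unfolding e by (rule card_Diff_subset) (auto)
    moreover have "card (\<Union>i\<in>{1..h}. {v\<in>Us i. Pr v}) \<le> card {v. Pr v}"
      by (rule card_mono[OF _ sub']) simp
    ultimately show ?thesis using cu by simp
  qed
  have len: "(q - 1) * CARD('m) = (q ^ k - 1) - h * (q ^ u - 1) \<and> h * (q ^ u - 1) \<le> q ^ k - 1"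
  proof -
    have c1: "card {v\<in>U. v \<noteq> 0} = (q - 1) * card {j::'m. column j G \<noteq> 0}"
      by (rule count) simp
    have "{j::'m. column j G \<noteq> 0} = UNIV" using col_ne0 by auto
    then have c1': "card {v\<in>U. v \<noteq> 0} = (q - 1) * CARD('m)" using c1 by simp
    have c2: "card {v::'a^'n. v \<noteq> 0} = q ^ k - 1"
    proof -
      have "{v::'a^'n. v \<noteq> 0} = UNIV - {0}" by auto
      then show ?thesis by (simp add: card_Diff_subset q_def k_def)
    qed
    have c3: "card {v\<in>Us i. v \<noteq> 0} = q ^ u - 1" if i: "i \<in> {1..h}" for i
    proof -
      have "{v\<in>Us i. v \<noteq> 0} = Us i - {0}" by auto
      moreover have "0 \<in> Us i" using sub[OF i] vec.subspace_0 by blast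
      ultimately show ?thesis using card_subspace[OF sub[OF i]] dimU[OF i] q_def
        by (simp add: card_Diff_subset)
    qed
    have "(\<Sum>i\<in>{1..h}. card {v\<in>Us i. v \<noteq> 0}) = h * (q ^ u - 1)" using c3 by simp
    then show ?thesis using sets[of "\<lambda>v. v \<noteq> 0"] c1' c2 by simp
  qed
  define M where "M = (\<lambda>x. {i\<in>{1..h}. \<exists>w\<in>Us i. dp x w \<noteq> 0})"
  have wt: "hamming_wt (x v* G) = A - card (M x) * P \<and> card (M x) * P \<le> A" if x0: "x \<noteq> 0" for x
  proof -
    have c1: "card {v\<in>U. dp x v \<noteq> 0} = (q - 1) * card {j::'m. dp x (column j G) \<noteq> 0}"
      by (rule count) (simp add: dp_scale)
    have hw: "hamming_wt (x v* G) = card {j::'m. dp x (column j G) \<noteq> 0}"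
      unfolding hamming_wt_def by (simp add: vmult_dp)
    have c2: "card {v. dp x v \<noteq> 0} = (q - 1) * A"
      using hyper[OF x0] unfolding A_def q_def k_def .
    have c3: "card {v\<in>Us i. dp x v \<noteq> 0} = (if i \<in> M x then (q - 1) * P else 0)" if i: "i \<in> {1..h}" for i
    proof (cases "i \<in> M x")
      case True
      then obtain w where "w \<in> Us i" "dp x w \<noteq> 0" unfolding M_def by auto
      then show ?thesis using fiber2[OF sub[OF i], of w x] dimU[OF i] True unfolding q_def P_def by simp
    next
      case False
      then have "{v\<in>Us i. dp x v \<noteq> 0} = {}" using i unfolding M_def by auto
      then show ?thesis using False by simp
    qed
    have "(\<Sum>i\<in>{1..h}. card {v\<in>Us i. dp x v \<noteq> 0}) = (\<Sum>i\<in>{1..h}. if i \<in> M x then (q - 1) * P else 0)"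
      using c3 by (rule sum.cong[OF refl])
    also have "\<dots> = card (M x) * ((q - 1) * P)"
      by (simp add: sum_if_const M_def)
    finally have s: "(\<Sum>i\<in>{1..h}. card {v\<in>Us i. dp x v \<noteq> 0}) = card (M x) * ((q - 1) * P)" .
    have main: "(q - 1) * hamming_wt (x v* G) = (q - 1) * A - card (M x) * ((q - 1) * P)"
      and le: "card (M x) * ((q - 1) * P) \<le> (q - 1) * A"
      using sets[of "\<lambda>v. dp x v \<noteq> 0"] c1 hw c2 s by simp_all
    have q1: "q - 1 > 0" using q2' by simp
    have le': "card (M x) * P \<le> A"
      using le q1 by (metis mult.left_commute mult_le_cancel1)
    have "(q - 1) * hamming_wt (x v* G) = (q - 1) * (A - card (M x) * P)"
      using main by (simp add: diff_mult_distrib2 mult.left_commute)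
    then show ?thesis using q1 le' by simp
  qed
  have MH: "card (M x) \<le> h" for x
  proof -
    have "M x \<subseteq> {1..h}" unfolding M_def by auto
    then show ?thesis using card_mono[of "{1..h}" "M x"] by simp
  qed
  have hPA: "h * P < A"
  proof -
    have "int q * int A - int A > int h * (int q * int P - 1)"
    proof -
      have a: "int q ^ k = int q * int A" using qA by (metis of_nat_mult of_nat_power)
      have b: "int q ^ u = int q * int P" using qP by (metis of_nat_mult of_nat_power)
      have c: "int q ^ (k - 1) = int A" unfolding A_def by simp
      show ?thesis using cond unfolding a b c .
    qed
    then have "int h * int P < int A" by (rule arith1) (use P1 q2' in auto)
    then show ?thesis by (simp flip: of_nat_mult)
  qed
  have wt_lb: "hamming_wt (x v* G) \<ge> A - h * P" and wt_pos: "hamming_wt (x v* G) > 0" if "x \<noteq> 0" for x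
  proof -
    have "card (M x) * P \<le> h * P" using MH by (simp add: mult_right_mono)
    then show "hamming_wt (x v* G) \<ge> A - h * P" using wt[OF that] by (simp only:)
    then show "hamming_wt (x v* G) > 0" using hPA by simp
  qed
  have Zc: "card {x::'a^'n. \<forall>w\<in>Us i. dp x w = 0} * P = A" if i: "i \<in> {1..h}" for i
  proof -
    have "card {x::'a^'n. \<forall>w\<in>Us i. dp x w = 0} * CARD('a) ^ (u - 1) = CARD('a) ^ (CARD('n) - 1)"
      by (rule Zcard[OF sub[OF i], unfolded dimU[OF i]]) (use u2 in linarith)
    then show ?thesis unfolding P_def A_def q_def k_def .
  qed
  define Zv where "Zv = A div P"
  have Zv: "card {x::'a^'n. \<forall>w\<in>Us i. dp x w = 0} = Zv" if i: "i \<in> {1..h}" for i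
    unfolding Zv_def by (subst Zc[OF i, symmetric]) (use P1 in simp)
  have Zv1: "Zv \<ge> 1"
  proof -
    have z0: "0 \<in> {x::'a^'n. \<forall>w\<in>Us 1. dp x w = 0}" by simp
    have "card {x::'a^'n. \<forall>w\<in>Us 1. dp x w = 0} > 0"
    proof -
      have "finite {x::'a^'n. \<forall>w\<in>Us 1. dp x w = 0}" by simp
      then show ?thesis using z0 card_gt_0_iff[of "{x::'a^'n. \<forall>w\<in>Us 1. dp x w = 0}"] by blast
    qed
    then have "card {x::'a^'n. \<forall>w\<in>Us 1. dp x w = 0} \<ge> 1" by simp
    then show ?thesis using Zv[of 1] h1 by simp
  qed
  have ZvP: "Zv * P = A" using Zc[of 1] Zv[of 1] h1 by simp
  obtain x0 :: "'a^'n" where x0: "x0 \<noteq> 0" "\<forall>i\<in>{1..h}. \<exists>w\<in>Us i. dp x0 w \<noteq> 0"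
  proof (rule ccontr)
    assume "\<not> thesis"
    then have bad: "\<forall>x. x \<noteq> 0 \<longrightarrow> (\<exists>i\<in>{1..h}. \<forall>w\<in>Us i. dp x w = 0)" using that by blast
    have "UNIV - {0} \<subseteq> (\<Union>i\<in>{1..h}. {x::'a^'n. \<forall>w\<in>Us i. dp x w = 0} - {0})" using bad by blast
    then have "card (UNIV - {0::'a^'n}) \<le> card (\<Union>i\<in>{1..h}. {x::'a^'n. \<forall>w\<in>Us i. dp x w = 0} - {0})"
      by (rule card_mono[rotated]) simp
    also have "\<dots> \<le> (\<Sum>i\<in>{1..h}. card ({x::'a^'n. \<forall>w\<in>Us i. dp x w = 0} - {0}))"
      by (rule card_UN_le) simp
    also have "\<dots> = (\<Sum>i\<in>{1..h}. Zv - 1)"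
    proof (rule sum.cong[OF refl])
      fix i assume i: "i \<in> {1..h}"
      have "0 \<in> {x::'a^'n. \<forall>w\<in>Us i. dp x w = 0}" by (simp add: dp_zero_left)
      then show "card ({x::'a^'n. \<forall>w\<in>Us i. dp x w = 0} - {0}) = Zv - 1"
        using Zv[OF i] by (simp add: card_Diff_subset)
    qed
    finally have "q ^ k - 1 \<le> h * (Zv - 1)" by (simp add: card_Diff_subset q_def k_def)
    then have nle: "q * A - 1 \<le> h * (Zv - 1)" using qA by simp
    have A1: "A \<ge> 1" unfolding A_def using q2' by simp
    have qA1: "q * A \<ge> 1" using A1 q2' by (simp add: Suc_le_eq)
    have "int (q * A - 1) = int q * int A - 1" using qA1 by (simp add: of_nat_diff)
    moreover have "int (h * (Zv - 1)) = int h * (int Zv - 1)" using Zv1 by (simp add: of_nat_diff)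
    ultimately have "int q * int A - 1 \<le> int h * (int Zv - 1)" using nle by (metis of_nat_le_iff)
    moreover have "int h * (int Zv - 1) < int q * int A - 1"
    proof (rule arith2[where P="int P"])
      show "int Zv * int P = int A" using ZvP by (metis of_nat_mult)
      have "h \<le> q * P" using hq qP by simp
      then show "int h \<le> int q * int P" by (metis of_nat_le_iff of_nat_mult)
    qed (use Zv1 P1 q2' in simp_all)
    ultimately show False by simp
  qed
  have Mx0: "M x0 = {1..h}" using x0 unfolding M_def by auto
  have wx0: "hamming_wt (x0 v* G) = A - h * P" using wt[OF x0(1)] Mx0 by simp
  have md: "min_dist (gen_code G) = A - h * P"
    unfolding min_dist_def
  proof (rule Min_eqI)
    show "finite {hamming_wt c |c. c \<in> gen_code G \<and> c \<noteq> 0}"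
    proof (rule finite_subset[of _ "range hamming_wt"])
      show "finite (range (hamming_wt :: 'a^'m \<Rightarrow> nat))" by simp
    qed auto
    show "\<And>y. y \<in> {hamming_wt c |c. c \<in> gen_code G \<and> c \<noteq> 0} \<Longrightarrow> A - h * P \<le> y"
    proof -
      fix y assume "y \<in> {hamming_wt c |c. c \<in> gen_code G \<and> c \<noteq> 0}"
      then obtain x where "y = hamming_wt (x v* G)" "x v* G \<noteq> 0" unfolding gen_code_def by auto
      moreover then have "x \<noteq> 0" by auto
      ultimately show "A - h * P \<le> y" using wt_lb by simp
    qed
    have "x0 v* G \<noteq> 0" using wt_pos[OF x0(1)] by (auto simp: hamming_wt_def)
    then show "A - h * P \<in> {hamming_wt c |c. c \<in> gen_code G \<and> c \<noteq> 0}"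
      using wx0 unfolding gen_code_def by (intro CollectI exI[of _ "x0 v* G"]) auto
  qed
  have injf: "inj (\<lambda>x::'a^'n. x v* G)"
  proof (rule injI)
    fix x y :: "'a^'n" assume e: "x v* G = y v* G"
    have "(x - y) v* G = x v* G - y v* G"
      by (simp add: vec_eq_iff vector_matrix_mult_def sum_subtractf algebra_simps)
    then have "(x - y) v* G = 0" using e by simp
    then have "hamming_wt ((x - y) v* G) = 0" by (simp add: hamming_wt_def)
    then show "x = y" using wt_pos[of "x - y"] by (cases "x - y = 0") auto
  qed
  have dim: "vec.dim (gen_code G) = k"
  proof -
    have "vec.dim ((\<lambda>x::'a^'n. x v* G) ` UNIV) = vec.dim (UNIV :: ('a^'n) set)"
      by (rule vec.dim_image_eq[OF lin_vm]) (use injf in \<open>simp add: inj_on_def\<close>)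
    then show ?thesis unfolding gen_code_def vec_dim_card k_def .
  qed
  have r1: "real CARD('m) = (real (q ^ k - 1) - real h * real (q ^ u - 1)) / real (q - 1)"
  proof -
    have "real (q - 1) * real CARD('m) = real (q ^ k - 1) - real h * real (q ^ u - 1)"
    proof -
      have e: "(q - 1) * CARD('m) = (q ^ k - 1) - h * (q ^ u - 1)" and le: "h * (q ^ u - 1) \<le> q ^ k - 1"
        using len by auto
      have "real ((q - 1) * CARD('m)) = real (q ^ k - 1) - real (h * (q ^ u - 1))"
        unfolding e by (rule of_nat_diff[OF le])
      then show ?thesis by simp
    qed
    moreover have "real (q - 1) > 0" using q2' by simp
    ultimately show ?thesis by (simp add: field_simps)
  qed
  have r3: "int (min_dist (gen_code G)) = int q ^ (k - 1) - int h * int q ^ (u - 1)"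
    using md hPA unfolding A_def P_def by (simp add: of_nat_diff)
  show ?thesis using r1 dim r3 by blast
qed

end
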